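(* Consider a finite tabular MDP with a unique optimal policy $\pi^*$, in which all states are reachable: $d_\rho^\pi(s)\ge d_{\min}>0$ for all $s\in\mathcal S$ and all policies $\pi$ with full action support. Under the discrete EG update $\pi_{t+1}(a|s)=\pi_t(a|s)\,e^{\eta[U^t_a(s)]_+}/Z^t_s$ with a sufficiently small constant step size $\eta>0$ (started from a softmax policy), (1) $V(\pi_t)\to V^*=V(\pi^* )$, and (2) $\pi_t\to\pi^*$.
   Context: A finite MDP $(\mathcal S,\mathcal A,P,r,\gamma,\rho)$ has finite state and action spaces, transition kernel $P(s'|s,a)$, reward $r(s,a)\in[0,1]$, discount $\gamma\in[0,1)$, initial distribution $\rho$. Tabular softmax policies are $\pi_\theta(a|s)=e^{\theta(s,a)}/\sum_{a'}e^{\theta(s,a')}$. $V^\pi(s)$ and $Q^\pi(s,a)$ are the expected discounted returns from $s$ (resp. from $s$ taking $a$ first), $V(\pi)=\mathbb{E}_{s\sim\rho}V^\pi(s)$, $V^*$ the optimal value, and $d_\rho^\pi(s)=(1-\gamma)\sum_{t\ge0}\gamma^t\Pr(s_t=s\mid\rho,\pi)$. At iteration $t$, $U^t_a(s):=Q^{\pi_t}(s,a)-V^{\pi_t}(s)$, $[x]_+=\max(x,0)$, and $Z^t_s:=\sum_{a'}\pi_t(a'|s)e^{\eta[U^t_{a'}(s)]_+}$. *)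

theory Defs
  imports "HOL-Analysis.Analysis"
begin

text \<open>P s a s' = P(s'|s,a), r s a = reward, g = discount, rho = initial distribution.
  A (stationary, stochastic) policy is p s a = p(a|s).\<close>

definition stoch_policy :: "('s::finite \<Rightarrow> 'a::finite \<Rightarrow> real) \<Rightarrow> bool" where
  "stoch_policy p \<longleftrightarrow> (\<forall>s a. 0 \<le> p s a) \<and> (\<forall>s. (\<Sum>a\<in>UNIV. p s a) = 1)"

definition full_support :: "('s::finite \<Rightarrow> 'a::finite \<Rightarrow> real) \<Rightarrow> bool" where
  "full_support p \<longleftrightarrow> (\<forall>s a. 0 < p s a)"

definition valid_mdp ::
  "('s::finite \<Rightarrow> 'a::finite \<Rightarrow> 's \<Rightarrow> real) \<Rightarrow> ('s \<Rightarrow> 'a \<Rightarrow> real) \<Rightarrow> real \<Rightarrow> ('s \<Rightarrow> real) \<Rightarrow> bool" where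
  "valid_mdp P r g rho \<longleftrightarrow>
     (\<forall>s a s'. 0 \<le> P s a s') \<and> (\<forall>s a. (\<Sum>s'\<in>UNIV. P s a s') = 1) \<and>
     (\<forall>s a. 0 \<le> r s a \<and> r s a \<le> 1) \<and> 0 \<le> g \<and> g < 1 \<and>
     (\<forall>s. 0 \<le> rho s) \<and> (\<Sum>s\<in>UNIV. rho s) = 1"

fun state_dist ::
  "('s::finite \<Rightarrow> 'a::finite \<Rightarrow> 's \<Rightarrow> real) \<Rightarrow> ('s \<Rightarrow> 'a \<Rightarrow> real) \<Rightarrow> 's \<Rightarrow> nat \<Rightarrow> 's \<Rightarrow> real" where
  "state_dist P p s0 0 s = (if s = s0 then 1 else 0)"
| "state_dist P p s0 (Suc t) s =
     (\<Sum>s'\<in>UNIV. state_dist P p s0 t s' * (\<Sum>a\<in>UNIV. p s' a * P s' a s))"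

definition Vf ::
  "('s::finite \<Rightarrow> 'a::finite \<Rightarrow> 's \<Rightarrow> real) \<Rightarrow> ('s \<Rightarrow> 'a \<Rightarrow> real) \<Rightarrow> real \<Rightarrow> ('s \<Rightarrow> 'a \<Rightarrow> real) \<Rightarrow> 's \<Rightarrow> real" where
  "Vf P r g p s0 =
     (\<Sum>t. g ^ t * (\<Sum>s\<in>UNIV. state_dist P p s0 t s * (\<Sum>a\<in>UNIV. p s a * r s a)))"

definition Qf ::
  "('s::finite \<Rightarrow> 'a::finite \<Rightarrow> 's \<Rightarrow> real) \<Rightarrow> ('s \<Rightarrow> 'a \<Rightarrow> real) \<Rightarrow> real \<Rightarrow> ('s \<Rightarrow> 'a \<Rightarrow> real) \<Rightarrow> 's \<Rightarrow> 'a \<Rightarrow> real" where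
  "Qf P r g p s a = r s a + g * (\<Sum>s'\<in>UNIV. P s a s' * Vf P r g p s')"

definition Vrho ::
  "('s::finite \<Rightarrow> 'a::finite \<Rightarrow> 's \<Rightarrow> real) \<Rightarrow> ('s \<Rightarrow> 'a \<Rightarrow> real) \<Rightarrow> real \<Rightarrow> ('s \<Rightarrow> real) \<Rightarrow> ('s \<Rightarrow> 'a \<Rightarrow> real) \<Rightarrow> real" where
  "Vrho P r g rho p = (\<Sum>s\<in>UNIV. rho s * Vf P r g p s)"

definition Vstar ::
  "('s::finite \<Rightarrow> 'a::finite \<Rightarrow> 's \<Rightarrow> real) \<Rightarrow> ('s \<Rightarrow> 'a \<Rightarrow> real) \<Rightarrow> real \<Rightarrow> ('s \<Rightarrow> real) \<Rightarrow> real" where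
  "Vstar P r g rho = (SUP p\<in>{p. stoch_policy p}. Vrho P r g rho p)"

definition optimal_policy ::
  "('s::finite \<Rightarrow> 'a::finite \<Rightarrow> 's \<Rightarrow> real) \<Rightarrow> ('s \<Rightarrow> 'a \<Rightarrow> real) \<Rightarrow> real \<Rightarrow> ('s \<Rightarrow> 'a \<Rightarrow> real) \<Rightarrow> bool" where
  "optimal_policy P r g p \<longleftrightarrow> stoch_policy p \<and>
     (\<forall>p'. stoch_policy p' \<longrightarrow> (\<forall>s. Vf P r g p' s \<le> Vf P r g p s))"

definition dvis ::
  "('s::finite \<Rightarrow> 'a::finite \<Rightarrow> 's \<Rightarrow> real) \<Rightarrow> real \<Rightarrow> ('s \<Rightarrow> real) \<Rightarrow> ('s \<Rightarrow> 'a \<Rightarrow> real) \<Rightarrow> 's \<Rightarrow> real" where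
  "dvis P g rho p s = (1 - g) * (\<Sum>t. g ^ t * (\<Sum>s0\<in>UNIV. rho s0 * state_dist P p s0 t s))"

definition softmax :: "('s \<Rightarrow> 'a::finite \<Rightarrow> real) \<Rightarrow> 's \<Rightarrow> 'a \<Rightarrow> real" where
  "softmax theta s a = exp (theta s a) / (\<Sum>a'\<in>UNIV. exp (theta s a'))"

definition adv ::
  "('s::finite \<Rightarrow> 'a::finite \<Rightarrow> 's \<Rightarrow> real) \<Rightarrow> ('s \<Rightarrow> 'a \<Rightarrow> real) \<Rightarrow> real \<Rightarrow> ('s \<Rightarrow> 'a \<Rightarrow> real) \<Rightarrow> 's \<Rightarrow> 'a \<Rightarrow> real" where
  "adv P r g p s a = Qf P r g p s a - Vf P r g p s"

definition eg_step ::
  "('s::finite \<Rightarrow> 'a::finite \<Rightarrow> 's \<Rightarrow> real) \<Rightarrow> ('s \<Rightarrow> 'a \<Rightarrow> real) \<Rightarrow> real \<Rightarrow> real \<Rightarrow> ('s \<Rightarrow> 'a \<Rightarrow> real) \<Rightarrow> 's \<Rightarrow> 'a \<Rightarrow> real" where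
  "eg_step P r g eta p s a =
     p s a * exp (eta * max 0 (adv P r g p s a)) /
     (\<Sum>a'\<in>UNIV. p s a' * exp (eta * max 0 (adv P r g p s a')))"

end

theory Submission
  imports Defs
begin


definition Mp :: "('s::finite \<Rightarrow> 'a::finite \<Rightarrow> 's \<Rightarrow> real) \<Rightarrow> ('s \<Rightarrow> 'a \<Rightarrow> real) \<Rightarrow> 's \<Rightarrow> 's \<Rightarrow> real" where
  "Mp P p s s' = (\<Sum>a\<in>UNIV. p s a * P s a s')"

definition occ :: "('s::finite \<Rightarrow> 'a::finite \<Rightarrow> 's \<Rightarrow> real) \<Rightarrow> real \<Rightarrow> ('s \<Rightarrow> 'a \<Rightarrow> real) \<Rightarrow> 's \<Rightarrow> ('s \<Rightarrow> real) \<Rightarrow> real" where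
  "occ P g p s0 f = (\<Sum>t. g ^ t * (\<Sum>s\<in>UNIV. state_dist P p s0 t s * f s))"

definition rp :: "('s \<Rightarrow> 'a::finite \<Rightarrow> real) \<Rightarrow> ('s \<Rightarrow> 'a \<Rightarrow> real) \<Rightarrow> 's \<Rightarrow> real" where
  "rp r p s = (\<Sum>a\<in>UNIV. p s a * r s a)"

lemma sd_Suc': "state_dist P p s0 (Suc t) s = (\<Sum>s'\<in>UNIV. state_dist P p s0 t s' * Mp P p s' s)"
  by (simp add: Mp_def)

lemma sd_first: "state_dist P p s0 (Suc t) s = (\<Sum>s'\<in>UNIV. Mp P p s0 s' * state_dist P p s' t s)"
proof (induction t arbitrary: s)
  case 0
  have "state_dist P p s0 (Suc 0) s = (\<Sum>s'\<in>UNIV. (if s' = s0 then 1 else 0) * Mp P p s' s)"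
    by (simp only: sd_Suc' state_dist.simps(1))
  also have "\<dots> = (\<Sum>s'\<in>UNIV. (if s' = s0 then Mp P p s' s else 0))"
    by (rule sum.cong) auto
  also have "\<dots> = Mp P p s0 s" by simp
  also have "\<dots> = (\<Sum>s'\<in>UNIV. (if s' = s then Mp P p s0 s' else 0))" by simp
  also have "\<dots> = (\<Sum>s'\<in>UNIV. Mp P p s0 s' * (if s = s' then 1 else 0))"
    by (rule sum.cong) auto
  finally show ?case by simp
next
  case (Suc t)
  have "state_dist P p s0 (Suc (Suc t)) s = (\<Sum>x\<in>UNIV. state_dist P p s0 (Suc t) x * Mp P p x s)"
    by (rule sd_Suc')
  also have "\<dots> = (\<Sum>x\<in>UNIV. (\<Sum>s'\<in>UNIV. Mp P p s0 s' * state_dist P p s' t x) * Mp P p x s)"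
    using Suc by simp
  also have "\<dots> = (\<Sum>s'\<in>UNIV. Mp P p s0 s' * (\<Sum>x\<in>UNIV. state_dist P p s' t x * Mp P p x s))"
    unfolding sum_distrib_left sum_distrib_right mult.assoc by (rule sum.swap)
  also have "\<dots> = (\<Sum>s'\<in>UNIV. Mp P p s0 s' * state_dist P p s' (Suc t) s)"
    by (simp add: Mp_def)
  finally show ?case .
qed

lemma sum_delta_mult: "(\<Sum>x\<in>(UNIV::'b::finite set). (if x = s0 then 1 else 0) * f x) = (f s0::real)"
proof -
  have "(\<Sum>x\<in>UNIV. (if x = s0 then 1 else 0) * f x) = (\<Sum>x\<in>UNIV. (if x = s0 then f x else 0))"
    by (rule sum.cong) auto
  also have "\<dots> = f s0" by (simp add: sum.delta sum.delta')
  finally show ?thesis .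
qed

locale mdp =
  fixes P :: "'s::finite \<Rightarrow> 'a::finite \<Rightarrow> 's \<Rightarrow> real" and r :: "'s \<Rightarrow> 'a \<Rightarrow> real" and g :: real
  assumes P_nonneg: "0 \<le> P s a s'" and P_sum: "(\<Sum>s'\<in>UNIV. P s a s') = 1"
    and r_nonneg: "0 \<le> r s a" and r_le1: "r s a \<le> 1" and g_nonneg: "0 \<le> g" and g_lt1: "g < 1"
begin

lemma Mp_nonneg: "stoch_policy p \<Longrightarrow> 0 \<le> Mp P p s s'"
  unfolding Mp_def stoch_policy_def by (auto intro!: sum_nonneg simp: P_nonneg)

lemma Mp_sum: "stoch_policy p \<Longrightarrow> (\<Sum>s'\<in>UNIV. Mp P p s s') = 1"
  unfolding Mp_def stoch_policy_def
  by (subst sum.swap) (simp add: sum_distrib_left[symmetric] P_sum)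

lemma sd_nonneg: "stoch_policy p \<Longrightarrow> 0 \<le> state_dist P p s0 t s"
  by (induction t arbitrary: s) (auto intro!: sum_nonneg mult_nonneg_nonneg Mp_nonneg simp: sd_Suc' simp del: state_dist.simps(2))

lemma sd_sum: "stoch_policy p \<Longrightarrow> (\<Sum>s\<in>UNIV. state_dist P p s0 t s) = 1"
proof (induction t)
  case 0 then show ?case by simp
next
  case (Suc t)
  have "(\<Sum>s\<in>UNIV. state_dist P p s0 (Suc t) s) = (\<Sum>s'\<in>UNIV. state_dist P p s0 t s' * (\<Sum>s\<in>UNIV. Mp P p s' s))"
    unfolding sd_Suc' sum_distrib_left by (rule sum.swap)
  also have "\<dots> = 1" using Suc by (simp add: Mp_sum)
  finally show ?case .
qed

lemma sd_le1: "stoch_policy p \<Longrightarrow> state_dist P p s0 t s \<le> 1"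
proof -
  assume p: "stoch_policy p"
  have "state_dist P p s0 t s \<le> (\<Sum>s\<in>UNIV. state_dist P p s0 t s)"
    by (rule member_le_sum) (auto simp: sd_nonneg p)
  then show ?thesis using sd_sum[OF p] by simp
qed

lemma abs_sd_sum_le: "stoch_policy p \<Longrightarrow> \<bar>\<Sum>s\<in>UNIV. state_dist P p s0 t s * f s\<bar> \<le> (\<Sum>s\<in>UNIV. \<bar>f s\<bar>)"
proof -
  assume p: "stoch_policy p"
  have "\<bar>\<Sum>s\<in>UNIV. state_dist P p s0 t s * f s\<bar> \<le> (\<Sum>s\<in>UNIV. \<bar>state_dist P p s0 t s * f s\<bar>)"
    by (rule sum_abs)
  also have "\<dots> \<le> (\<Sum>s\<in>UNIV. \<bar>f s\<bar>)"
    by (rule sum_mono) (simp add: abs_mult sd_nonneg sd_le1 p mult_left_le_one_le)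
  finally show ?thesis .
qed

lemma occ_summable: "stoch_policy p \<Longrightarrow> summable (\<lambda>t. g ^ t * (\<Sum>s\<in>UNIV. state_dist P p s0 t s * f s))"
proof -
  assume p: "stoch_policy p"
  show ?thesis
  proof (rule summable_comparison_test'[where g="\<lambda>t. g ^ t * (\<Sum>s\<in>UNIV. \<bar>f s\<bar>)" and N=0])
    show "summable (\<lambda>t. g ^ t * (\<Sum>s\<in>UNIV. \<bar>f s\<bar>))"
      by (rule summable_mult2) (simp add: g_nonneg g_lt1)
    fix n
    show "norm (g ^ n * (\<Sum>s\<in>UNIV. state_dist P p s0 n s * f s)) \<le> g ^ n * (\<Sum>s\<in>UNIV. \<bar>f s\<bar>)"
      using abs_sd_sum_le[OF p] by (simp add: abs_mult g_nonneg mult_left_mono)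
  qed
qed

lemma occ_sums: "stoch_policy p \<Longrightarrow> (\<lambda>t. g ^ t * (\<Sum>s\<in>UNIV. state_dist P p s0 t s * f s)) sums occ P g p s0 f"
  unfolding occ_def by (rule summable_sums[OF occ_summable])


lemma occ_unique:
  assumes p: "stoch_policy p" and h: "\<And>s. h s = f s + g * (\<Sum>s'\<in>UNIV. Mp P p s s' * h s')"
  shows "h s0 = occ P g p s0 f"
proof -
  define T where "T t = g ^ t * (\<Sum>s\<in>UNIV. state_dist P p s0 t s * f s)" for t
  define R where "R n = g ^ n * (\<Sum>s\<in>UNIV. state_dist P p s0 n s * h s)" for n
  have step: "(\<Sum>s\<in>UNIV. state_dist P p s0 n s * h s) = (\<Sum>s\<in>UNIV. state_dist P p s0 n s * f s) + g * (\<Sum>s\<in>UNIV. state_dist P p s0 (Suc n) s * h s)" for n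
  proof -
    have "(\<Sum>s\<in>UNIV. state_dist P p s0 n s * h s) = (\<Sum>s\<in>UNIV. state_dist P p s0 n s * f s + g * (\<Sum>s'\<in>UNIV. state_dist P p s0 n s * Mp P p s s' * h s'))"
    proof (rule sum.cong[OF refl])
      fix s
      show "state_dist P p s0 n s * h s = state_dist P p s0 n s * f s + g * (\<Sum>s'\<in>UNIV. state_dist P p s0 n s * Mp P p s s' * h s')"
        by (subst h[of s]) (simp add: algebra_simps sum_distrib_left)
    qed
    also have "\<dots> = (\<Sum>s\<in>UNIV. state_dist P p s0 n s * f s) + g * (\<Sum>s\<in>UNIV. \<Sum>s'\<in>UNIV. state_dist P p s0 n s * Mp P p s s' * h s')"
      by (simp add: sum.distrib sum_distrib_left)
    also have "(\<Sum>s\<in>UNIV. \<Sum>s'\<in>UNIV. state_dist P p s0 n s * Mp P p s s' * h s') = (\<Sum>s\<in>UNIV. state_dist P p s0 (Suc n) s * h s)"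
      unfolding sd_Suc' sum_distrib_right by (rule sum.swap)
    finally show ?thesis .
  qed
  have part: "h s0 = (\<Sum>t<n. T t) + R n" for n
  proof (induction n)
    case 0
    have "R 0 = h s0"
      unfolding R_def by (simp add: sum_delta_mult)
    then show ?case by simp
  next
    case (Suc n)
    have "R n = T n + R (Suc n)" unfolding R_def T_def by (subst step) (simp add: algebra_simps)
    then show ?case using Suc by simp
  qed
  have "R \<longlonglongrightarrow> 0"
  proof (rule Lim_null_comparison)
    show "\<forall>\<^sub>F n in sequentially. norm (R n) \<le> g ^ n * (\<Sum>s\<in>UNIV. \<bar>h s\<bar>)"
    proof (rule always_eventually, rule allI)
      fix n
      show "norm (R n) \<le> g ^ n * (\<Sum>s\<in>UNIV. \<bar>h s\<bar>)"
        using abs_sd_sum_le[OF p, of s0 n h] unfolding R_def by (simp add: abs_mult g_nonneg mult_left_mono)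
    qed
    have "(\<lambda>n. g ^ n * (\<Sum>s\<in>UNIV. \<bar>h s\<bar>)) \<longlonglongrightarrow> 0 * (\<Sum>s\<in>UNIV. \<bar>h s\<bar>)"
      by (intro tendsto_intros) (use g_nonneg g_lt1 in simp)
    then show "(\<lambda>n. g ^ n * (\<Sum>s\<in>UNIV. \<bar>h s\<bar>)) \<longlonglongrightarrow> 0" by simp
  qed
  then have "(\<lambda>n. h s0 - R n) \<longlonglongrightarrow> h s0 - 0" by (intro tendsto_intros)
  moreover have "(\<lambda>n. h s0 - R n) = (\<lambda>n. \<Sum>t<n. T t)" using part by (auto simp: algebra_simps)
  ultimately have "T sums h s0" by (simp add: sums_def)
  then show ?thesis using occ_sums[OF p, of s0 f] unfolding T_def by (rule sums_unique2)
qed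

lemma Vf_occ: "Vf P r g p s0 = occ P g p s0 (rp r p)"
  by (simp add: Vf_def occ_def rp_def)

lemma V_bellman:
  assumes p: "stoch_policy p"
  shows "Vf P r g p s = rp r p s + g * (\<Sum>s'\<in>UNIV. Mp P p s s' * Vf P r g p s')"
proof -
  define T where "T s' t = g ^ t * (\<Sum>x\<in>UNIV. state_dist P p s' t x * rp r p x)" for s' t
  have Ts: "T s' sums Vf P r g p s'" for s'
    unfolding T_def Vf_occ by (rule occ_sums[OF p])
  have "(\<lambda>t. g * (\<Sum>s'\<in>UNIV. Mp P p s s' * T s' t)) sums (g * (\<Sum>s'\<in>UNIV. Mp P p s s' * Vf P r g p s'))"
    by (intro sums_mult sums_sum Ts)
  moreover have "T s (Suc t) = g * (\<Sum>s'\<in>UNIV. Mp P p s s' * T s' t)" for t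
  proof -
    have "(\<Sum>x\<in>UNIV. state_dist P p s (Suc t) x * rp r p x) = (\<Sum>x\<in>UNIV. \<Sum>s'\<in>UNIV. Mp P p s s' * state_dist P p s' t x * rp r p x)"
      unfolding sd_first sum_distrib_right by simp
    also have "\<dots> = (\<Sum>s'\<in>UNIV. \<Sum>x\<in>UNIV. Mp P p s s' * state_dist P p s' t x * rp r p x)"
      by (rule sum.swap)
    also have "\<dots> = (\<Sum>s'\<in>UNIV. Mp P p s s' * (\<Sum>x\<in>UNIV. state_dist P p s' t x * rp r p x))"
      by (simp add: sum_distrib_left mult.assoc)
    finally show ?thesis unfolding T_def by (simp add: sum_distrib_left algebra_simps)
  qed
  ultimately have "(\<lambda>t. T s (Suc t)) sums (g * (\<Sum>s'\<in>UNIV. Mp P p s s' * Vf P r g p s'))" by simp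
  then have "T s sums (g * (\<Sum>s'\<in>UNIV. Mp P p s s' * Vf P r g p s') + T s 0)" by (simp add: sums_Suc_iff)
  moreover have "T s 0 = rp r p s"
  proof -
    show ?thesis
      unfolding T_def by (simp add: sum_delta_mult)
  qed
  ultimately show ?thesis using Ts[of s] sums_unique2 by (metis add.commute)
qed

lemma sum_pQ_gen:
  "(\<Sum>a\<in>UNIV. p s a * Qf P r g q s a) = rp r p s + g * (\<Sum>s'\<in>UNIV. Mp P p s s' * Vf P r g q s')"
proof -
  have "(\<Sum>a\<in>UNIV. p s a * Qf P r g q s a) = rp r p s + g * (\<Sum>a\<in>UNIV. \<Sum>s'\<in>UNIV. p s a * P s a s' * Vf P r g q s')"
    by (simp add: Qf_def rp_def algebra_simps sum.distrib sum_distrib_left)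
  also have "(\<Sum>a\<in>UNIV. \<Sum>s'\<in>UNIV. p s a * P s a s' * Vf P r g q s') = (\<Sum>s'\<in>UNIV. \<Sum>a\<in>UNIV. p s a * P s a s' * Vf P r g q s')"
    by (rule sum.swap)
  also have "\<dots> = (\<Sum>s'\<in>UNIV. Mp P p s s' * Vf P r g q s')"
    by (simp add: Mp_def sum_distrib_right)
  finally show ?thesis .
qed

lemma sum_p_const: "stoch_policy p \<Longrightarrow> (\<Sum>a\<in>UNIV. p s a * c) = c"
  unfolding stoch_policy_def by (simp add: sum_distrib_right[symmetric])

lemma sum_pA_gen:
  "stoch_policy p \<Longrightarrow> (\<Sum>a\<in>UNIV. p s a * adv P r g q s a) = rp r p s + g * (\<Sum>s'\<in>UNIV. Mp P p s s' * Vf P r g q s') - Vf P r g q s"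
  unfolding adv_def by (simp add: right_diff_distrib sum_subtractf sum_pQ_gen sum_p_const)

lemma sum_pA: "stoch_policy p \<Longrightarrow> (\<Sum>a\<in>UNIV. p s a * adv P r g p s a) = 0"
  using sum_pA_gen[of p s p] V_bellman[of p s] by simp

lemma perf_diff:
  assumes p: "stoch_policy p" and q: "stoch_policy q"
  shows "Vf P r g p s0 - Vf P r g q s0 = occ P g p s0 (\<lambda>s. \<Sum>a\<in>UNIV. p s a * adv P r g q s a)"
proof (rule occ_unique[OF p])
  fix s
  have e1: "Vf P r g p s = rp r p s + g * (\<Sum>s'\<in>UNIV. Mp P p s s' * Vf P r g p s')" by (rule V_bellman[OF p])
  have e2: "(\<Sum>a\<in>UNIV. p s a * adv P r g q s a) = rp r p s + g * (\<Sum>s'\<in>UNIV. Mp P p s s' * Vf P r g q s') - Vf P r g q s"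
    by (rule sum_pA_gen[OF p])
  have e3: "g * (\<Sum>s'\<in>UNIV. Mp P p s s' * (Vf P r g p s' - Vf P r g q s')) = g * (\<Sum>s'\<in>UNIV. Mp P p s s' * Vf P r g p s') - g * (\<Sum>s'\<in>UNIV. Mp P p s s' * Vf P r g q s')"
    by (simp add: right_diff_distrib sum_subtractf)
  show "Vf P r g p s - Vf P r g q s = (\<Sum>a\<in>UNIV. p s a * adv P r g q s a) + g * (\<Sum>s'\<in>UNIV. Mp P p s s' * (Vf P r g p s' - Vf P r g q s'))"
    using e1 e2 e3 by linarith
qed

lemma occ_term_nonneg: "stoch_policy p \<Longrightarrow> (\<And>s. 0 \<le> f s) \<Longrightarrow> 0 \<le> g ^ t * (\<Sum>s\<in>UNIV. state_dist P p s0 t s * f s)"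
  by (intro mult_nonneg_nonneg sum_nonneg) (auto simp: g_nonneg sd_nonneg)

lemma occ_ge_head:
  assumes p: "stoch_policy p" and f: "\<And>s. 0 \<le> f s"
  shows "f s0 \<le> occ P g p s0 f"
proof -
  have "sum (\<lambda>t. g ^ t * (\<Sum>s\<in>UNIV. state_dist P p s0 t s * f s)) {0} \<le> occ P g p s0 f"
    unfolding occ_def by (rule sum_le_suminf[OF occ_summable[OF p]]) (auto intro: occ_term_nonneg[OF p f])
  moreover have "(\<Sum>s\<in>UNIV. state_dist P p s0 0 s * f s) = f s0"
    by (simp add: sum_delta_mult)
  ultimately show ?thesis by simp
qed

lemma occ_mono:
  assumes p: "stoch_policy p" and f: "\<And>s. f s \<le> f' s"
  shows "occ P g p s0 f \<le> occ P g p s0 f'"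
  unfolding occ_def
proof (rule suminf_le[OF _ occ_summable[OF p] occ_summable[OF p]])
  fix t
  show "g ^ t * (\<Sum>s\<in>UNIV. state_dist P p s0 t s * f s) \<le> g ^ t * (\<Sum>s\<in>UNIV. state_dist P p s0 t s * f' s)"
    by (intro mult_left_mono sum_mono) (auto simp: g_nonneg sd_nonneg[OF p] f)
qed

lemma occ_const:
  assumes p: "stoch_policy p"
  shows "occ P g p s0 (\<lambda>_. c) = c / (1 - g)"
proof -
  have "(\<lambda>t. g ^ t * c) sums (1 / (1 - g) * c)"
    by (rule sums_mult2, rule geometric_sums) (use g_nonneg g_lt1 in simp)
  moreover have "(\<lambda>t. g ^ t * (\<Sum>s\<in>UNIV. state_dist P p s0 t s * c)) = (\<lambda>t. g ^ t * c)"
    by (simp add: sum_distrib_right[symmetric] sd_sum[OF p])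
  ultimately show ?thesis using occ_sums[OF p, of s0 "\<lambda>_. c"] sums_unique2 by fastforce
qed

lemma rp_bounds: "stoch_policy p \<Longrightarrow> 0 \<le> rp r p s \<and> rp r p s \<le> 1"
proof -
  assume p: "stoch_policy p"
  have "0 \<le> rp r p s" unfolding rp_def using p r_nonneg by (auto simp: stoch_policy_def intro!: sum_nonneg)
  moreover have "rp r p s \<le> (\<Sum>a\<in>UNIV. p s a * 1)" unfolding rp_def
    by (rule sum_mono, rule mult_left_mono) (use p r_le1 in \<open>auto simp: stoch_policy_def\<close>)
  ultimately show ?thesis using sum_p_const[OF p, of s 1] by simp
qed

lemma Vf_bounds: "stoch_policy p \<Longrightarrow> 0 \<le> Vf P r g p s \<and> Vf P r g p s \<le> 1 / (1 - g)"
proof -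
  assume p: "stoch_policy p"
  have "occ P g p s (\<lambda>_. 0) \<le> occ P g p s (rp r p)" by (rule occ_mono[OF p]) (use rp_bounds[OF p] in auto)
  moreover have "occ P g p s (rp r p) \<le> occ P g p s (\<lambda>_. 1)" by (rule occ_mono[OF p]) (use rp_bounds[OF p] in auto)
  ultimately show ?thesis by (simp add: Vf_occ occ_const[OF p])
qed

lemma Qf_le: "stoch_policy q \<Longrightarrow> Qf P r g q s a \<le> 1 / (1 - g)"
proof -
  assume q: "stoch_policy q"
  have "(\<Sum>s'\<in>UNIV. P s a s' * Vf P r g q s') \<le> (\<Sum>s'\<in>UNIV. P s a s' * (1 / (1 - g)))"
    by (intro sum_mono mult_left_mono) (auto simp: Vf_bounds[OF q] P_nonneg)
  also have "\<dots> = 1 / (1 - g)" by (simp add: sum_divide_distrib[symmetric] P_sum)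
  finally have "g * (\<Sum>s'\<in>UNIV. P s a s' * Vf P r g q s') \<le> g * (1 / (1 - g))"
    by (rule mult_left_mono) (rule g_nonneg)
  then have "Qf P r g q s a \<le> 1 + g * (1 / (1 - g))" unfolding Qf_def using r_le1[of s a] by linarith
  also have "\<dots> = 1 / (1 - g)" using g_lt1 by (simp add: field_simps)
  finally show ?thesis .
qed

lemma adv_le: "stoch_policy q \<Longrightarrow> adv P r g q s a \<le> 1 / (1 - g)"
  unfolding adv_def using Qf_le[of q s a] Vf_bounds[of q s] by linarith

lemma abs_rho_sd_le: "stoch_policy p \<Longrightarrow> \<bar>\<Sum>s0\<in>UNIV. rho s0 * state_dist P p s0 t s\<bar> \<le> (\<Sum>s0\<in>UNIV. \<bar>rho s0\<bar>)"
proof -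
  assume p: "stoch_policy p"
  have "\<bar>\<Sum>s0\<in>UNIV. rho s0 * state_dist P p s0 t s\<bar> \<le> (\<Sum>s0\<in>UNIV. \<bar>rho s0 * state_dist P p s0 t s\<bar>)"
    by (rule sum_abs)
  also have "\<dots> \<le> (\<Sum>s0\<in>UNIV. \<bar>rho s0\<bar>)"
    by (rule sum_mono) (simp add: abs_mult sd_nonneg sd_le1 p mult_right_le_one_le)
  finally show ?thesis .
qed

lemma rho_occ:
  assumes p: "stoch_policy p"
  shows "(\<Sum>s0\<in>UNIV. rho s0 * occ P g p s0 f) = (\<Sum>s\<in>UNIV. dvis P g rho p s * f s) / (1 - g)"
proof -
  define Y where "Y s t = g ^ t * (\<Sum>s0\<in>UNIV. rho s0 * state_dist P p s0 t s)" for s t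
  have Ysum: "summable (Y s)" for s
  proof (rule summable_comparison_test'[where g="\<lambda>t. g ^ t * (\<Sum>s0\<in>UNIV. \<bar>rho s0\<bar>)" and N=0])
    show "summable (\<lambda>t. g ^ t * (\<Sum>s0\<in>UNIV. \<bar>rho s0\<bar>))"
      by (rule summable_mult2) (simp add: g_nonneg g_lt1)
    fix n
    show "norm (Y s n) \<le> g ^ n * (\<Sum>s0\<in>UNIV. \<bar>rho s0\<bar>)"
      using abs_rho_sd_le[OF p] by (simp add: Y_def abs_mult g_nonneg mult_left_mono)
  qed
  have dv: "dvis P g rho p s = (1 - g) * suminf (Y s)" for s
    by (simp add: dvis_def Y_def[abs_def])
  have L: "(\<lambda>t. \<Sum>s0\<in>UNIV. rho s0 * (g ^ t * (\<Sum>s\<in>UNIV. state_dist P p s0 t s * f s))) sums (\<Sum>s0\<in>UNIV. rho s0 * occ P g p s0 f)"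
    by (intro sums_sum sums_mult occ_sums[OF p])
  have R: "(\<lambda>t. \<Sum>s\<in>UNIV. Y s t * f s) sums (\<Sum>s\<in>UNIV. suminf (Y s) * f s)"
    by (intro sums_sum sums_mult2 summable_sums Ysum)
  have eq: "(\<Sum>s0\<in>UNIV. rho s0 * (g ^ t * (\<Sum>s\<in>UNIV. state_dist P p s0 t s * f s))) = (\<Sum>s\<in>UNIV. Y s t * f s)" for t
  proof -
    have "(\<Sum>s0\<in>UNIV. rho s0 * (g ^ t * (\<Sum>s\<in>UNIV. state_dist P p s0 t s * f s))) = (\<Sum>s0\<in>UNIV. \<Sum>s\<in>UNIV. g ^ t * (rho s0 * state_dist P p s0 t s * f s))"
      by (simp add: sum_distrib_left algebra_simps)
    also have "\<dots> = (\<Sum>s\<in>UNIV. \<Sum>s0\<in>UNIV. g ^ t * (rho s0 * state_dist P p s0 t s * f s))"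
      by (rule sum.swap)
    also have "\<dots> = (\<Sum>s\<in>UNIV. Y s t * f s)"
      by (simp add: Y_def sum_distrib_left sum_distrib_right algebra_simps)
    finally show ?thesis .
  qed
  have "(\<Sum>s0\<in>UNIV. rho s0 * occ P g p s0 f) = (\<Sum>s\<in>UNIV. suminf (Y s) * f s)"
    using L R unfolding eq by (rule sums_unique2)
  also have "\<dots> = (\<Sum>s\<in>UNIV. dvis P g rho p s * f s) / (1 - g)"
    using g_lt1 by (simp add: dv sum_divide_distrib)
  finally show ?thesis .
qed

end


context mdp begin

definition dpol :: "('s \<Rightarrow> 'a \<Rightarrow> real) \<Rightarrow> 's \<Rightarrow> 'a \<Rightarrow> 's \<Rightarrow> 'a \<Rightarrow> real" where
  "dpol q s a = (\<lambda>s' b. if s' = s then (if b = a then 1 else 0) else q s' b)"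

lemma dpol_stoch:
  assumes q: "stoch_policy q" shows "stoch_policy (dpol q s a)"
proof -
  have "(\<Sum>b\<in>UNIV. dpol q s a s' b) = 1" for s'
    using q by (cases "s' = s") (auto simp: dpol_def stoch_policy_def)
  moreover have "0 \<le> dpol q s a s' b" for s' b
    using q by (auto simp: dpol_def stoch_policy_def)
  ultimately show ?thesis by (simp add: stoch_policy_def)
qed

lemma dpol_sumA:
  assumes q: "stoch_policy q"
  shows "(\<Sum>b\<in>UNIV. dpol q s a s' b * adv P r g q s' b) = (if s' = s then adv P r g q s a else 0)"
proof (cases "s' = s")
  case True
  then show ?thesis unfolding dpol_def by (simp add: sum_delta_mult)
next
  case False
  then show ?thesis unfolding dpol_def using sum_pA[OF q, of s'] by simp
qed

lemma Astar_le0: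
  assumes opt: "optimal_policy P r g q"
  shows "adv P r g q s a \<le> 0"
proof (rule ccontr)
  assume "\<not> adv P r g q s a \<le> 0"
  then have pos: "0 < adv P r g q s a" by simp
  have q: "stoch_policy q" using opt by (simp add: optimal_policy_def)
  let ?p = "dpol q s a"
  have "Vf P r g ?p s - Vf P r g q s = occ P g ?p s (\<lambda>s'. if s' = s then adv P r g q s a else 0)"
    using perf_diff[OF dpol_stoch[OF q, of s a] q, of s] by (simp add: dpol_sumA[OF q])
  also have "\<dots> \<ge> (\<lambda>s'. if s' = s then adv P r g q s a else 0) s"
    by (rule occ_ge_head[OF dpol_stoch[OF q]]) (use pos in auto)
  finally have "Vf P r g ?p s - Vf P r g q s \<ge> adv P r g q s a" by simp
  moreover have "Vf P r g ?p s \<le> Vf P r g q s"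
    using opt dpol_stoch[OF q] by (simp add: optimal_policy_def)
  ultimately show False using pos by linarith
qed

lemma Astar_zero:
  assumes opt: "optimal_policy P r g q" and uniq: "\<forall>p. optimal_policy P r g p \<longrightarrow> p = q"
    and z: "adv P r g q s a = 0"
  shows "q s a = 1"
proof -
  have q: "stoch_policy q" using opt by (simp add: optimal_policy_def)
  let ?p = "dpol q s a"
  have eqV: "Vf P r g ?p s0 = Vf P r g q s0" for s0
  proof -
    have lam: "(\<lambda>s'. if s' = s then adv P r g q s a else (0::real)) = (\<lambda>s'. 0)" using z by auto
    have "Vf P r g ?p s0 - Vf P r g q s0 = occ P g ?p s0 (\<lambda>s'. 0)"
      unfolding lam[symmetric]
      using perf_diff[OF dpol_stoch[OF q, of s a] q, of s0] by (simp add: dpol_sumA[OF q])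
    also have "\<dots> = 0" by (simp add: occ_const[OF dpol_stoch[OF q]])
    finally show ?thesis by simp
  qed
  have "optimal_policy P r g ?p"
    using opt dpol_stoch[OF q] by (simp add: optimal_policy_def eqV)
  then have "?p = q" using uniq by blast
  then have "?p s a = q s a" by simp
  then show ?thesis by (simp add: dpol_def)
qed

lemma Astar_neg:
  assumes opt: "optimal_policy P r g q" and n: "adv P r g q s a < 0"
  shows "q s a = 0"
proof -
  have q: "stoch_policy q" using opt by (simp add: optimal_policy_def)
  have "(\<Sum>b\<in>UNIV. - (q s b * adv P r g q s b)) = 0"
    using sum_pA[OF q, of s] by (simp add: sum_negf)
  moreover have "\<forall>b\<in>UNIV. 0 \<le> - (q s b * adv P r g q s b)"
    using q Astar_le0[OF opt] by (auto simp: stoch_policy_def mult_nonneg_nonpos)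
  ultimately have "\<forall>b\<in>UNIV. - (q s b * adv P r g q s b) = 0"
    using sum_nonneg_eq_0_iff[of UNIV "\<lambda>b. - (q s b * adv P r g q s b)"] by simp
  then show ?thesis using n by auto
qed

end

locale eg_run = mdp P r g for P :: "'s::finite \<Rightarrow> 'a::finite \<Rightarrow> 's \<Rightarrow> real" and r g +
  fixes eta :: real and ps :: "nat \<Rightarrow> 's \<Rightarrow> 'a \<Rightarrow> real"
  assumes eta_pos: "0 < eta" and ps0: "stoch_policy (ps 0)" and ps0_pos: "full_support (ps 0)"
    and ps_Suc: "ps (Suc t) = eg_step P r g eta (ps t)"
begin

abbreviation U where "U t s a \<equiv> adv P r g (ps t) s a"
abbreviation Z where "Z t s \<equiv> (\<Sum>a\<in>UNIV. ps t s a * exp (eta * max 0 (U t s a)))"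
abbreviation B where "B \<equiv> 1 / (1 - g)"

lemma ps_Suc_eq: "ps (Suc t) s a = ps t s a * exp (eta * max 0 (U t s a)) / Z t s"
  by (simp add: ps_Suc eg_step_def)

lemma ps_ok: "stoch_policy (ps t) \<and> full_support (ps t)"
proof (induction t)
  case 0 then show ?case using ps0 ps0_pos by simp
next
  case (Suc t)
  then have pos: "0 < ps t s a" for s a by (simp add: full_support_def)
  have Zpos: "0 < Z t s" for s
    by (rule sum_pos) (auto intro!: mult_pos_pos pos)
  have "0 < ps (Suc t) s a" for s a
    unfolding ps_Suc_eq using pos Zpos by simp
  moreover have "(\<Sum>a\<in>UNIV. ps (Suc t) s a) = 1" for s
    unfolding ps_Suc_eq using Zpos[of s] by (simp add: sum_divide_distrib[symmetric])
  ultimately show ?case by (auto simp: stoch_policy_def full_support_def less_imp_le)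
qed

lemma ps_stoch: "stoch_policy (ps t)" using ps_ok by simp
lemma ps_pos: "0 < ps t s a" using ps_ok by (simp add: full_support_def)
lemma ps_le1: "ps t s a \<le> 1"
proof -
  have "ps t s a \<le> (\<Sum>b\<in>UNIV. ps t s b)" by (rule member_le_sum) (auto simp: less_imp_le ps_pos)
  then show ?thesis using ps_stoch[of t] by (simp add: stoch_policy_def)
qed

lemma B_pos: "0 < B" using g_lt1 by simp

lemma maxU_le: "max 0 (U t s a) \<le> B"
  using adv_le[OF ps_stoch] B_pos by (simp add: less_imp_le)

lemma Z_ge1: "1 \<le> Z t s"
proof -
  have "(\<Sum>a\<in>UNIV. ps t s a * 1) \<le> Z t s"
  proof (rule sum_mono)
    fix a
    have "0 \<le> eta * max 0 (U t s a)" using eta_pos by simp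
    then show "ps t s a * 1 \<le> ps t s a * exp (eta * max 0 (U t s a))"
      by (intro mult_left_mono) (auto simp: less_imp_le ps_pos)
  qed
  then show ?thesis using sum_p_const[OF ps_stoch, of t s 1] by simp
qed

lemma Z_le: "Z t s \<le> exp (eta * B)"
proof -
  have "Z t s \<le> (\<Sum>a\<in>UNIV. ps t s a * exp (eta * B))"
  proof (rule sum_mono)
    fix a
    have "eta * max 0 (U t s a) \<le> eta * B" by (rule mult_left_mono[OF maxU_le]) (use eta_pos in simp)
    then show "ps t s a * exp (eta * max 0 (U t s a)) \<le> ps t s a * exp (eta * B)"
      by (intro mult_left_mono) (auto simp: less_imp_le ps_pos)
  qed
  then show ?thesis using sum_p_const[OF ps_stoch, of t s] by simp
qed

lemma key_scalar: "eta * (max 0 u)\<^sup>2 \<le> (exp (eta * max 0 u) - 1) * u"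
proof (cases "0 \<le> u")
  case True
  have "1 + eta * u \<le> exp (eta * u)" by (rule exp_ge_add_one_self)
  then have "eta * u \<le> exp (eta * u) - 1" by linarith
  from mult_right_mono[OF this True] have "(eta * u) * u \<le> (exp (eta * u) - 1) * u" .
  then show ?thesis using True by (simp add: power2_eq_square algebra_simps)
next
  case False
  then show ?thesis by simp
qed

definition S where "S t s = (\<Sum>a\<in>UNIV. ps t s a * (max 0 (U t s a))\<^sup>2)"
definition F where "F t s = (\<Sum>a\<in>UNIV. ps (Suc t) s a * U t s a)"
definition c where "c = eta / exp (eta * B)"

lemma c_pos: "0 < c" unfolding c_def using eta_pos by simp

lemma S_nonneg: "0 \<le> S t s"
  unfolding S_def by (intro sum_nonneg mult_nonneg_nonneg) (auto simp: less_imp_le ps_pos)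

lemma F_lower: "c * S t s \<le> F t s"
proof -
  have Z1: "1 \<le> Z t s" by (rule Z_ge1)
  have F_eq: "F t s = (\<Sum>a\<in>UNIV. ps t s a * exp (eta * max 0 (U t s a)) * U t s a) / Z t s"
    unfolding F_def ps_Suc_eq by (simp add: sum_divide_distrib)
  have "(\<Sum>a\<in>UNIV. ps t s a * exp (eta * max 0 (U t s a)) * U t s a)
      = (\<Sum>a\<in>UNIV. ps t s a * ((exp (eta * max 0 (U t s a)) - 1) * U t s a)) + (\<Sum>a\<in>UNIV. ps t s a * U t s a)"
    by (simp add: sum.distrib[symmetric] algebra_simps)
  also have "(\<Sum>a\<in>UNIV. ps t s a * U t s a) = 0" by (rule sum_pA[OF ps_stoch])
  finally have X: "(\<Sum>a\<in>UNIV. ps t s a * exp (eta * max 0 (U t s a)) * U t s a)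
      = (\<Sum>a\<in>UNIV. ps t s a * ((exp (eta * max 0 (U t s a)) - 1) * U t s a))" by simp
  have "eta * S t s \<le> (\<Sum>a\<in>UNIV. ps t s a * ((exp (eta * max 0 (U t s a)) - 1) * U t s a))"
    unfolding S_def sum_distrib_left
  proof (rule sum_mono)
    fix a
    have "ps t s a * (eta * (max 0 (U t s a))\<^sup>2) \<le> ps t s a * ((exp (eta * max 0 (U t s a)) - 1) * U t s a)"
      by (rule mult_left_mono[OF key_scalar]) (simp add: less_imp_le ps_pos)
    moreover have "eta * (ps t s a * (max 0 (U t s a))\<^sup>2) = ps t s a * (eta * (max 0 (U t s a))\<^sup>2)" by simp
    ultimately show "eta * (ps t s a * (max 0 (U t s a))\<^sup>2) \<le> ps t s a * ((exp (eta * max 0 (U t s a)) - 1) * U t s a)"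
      by linarith
  qed
  then have Y: "eta * S t s \<le> (\<Sum>a\<in>UNIV. ps t s a * exp (eta * max 0 (U t s a)) * U t s a)" using X by simp
  have "c * S t s = eta * S t s / exp (eta * B)" by (simp add: c_def)
  also have "\<dots> \<le> eta * S t s / Z t s"
    by (rule divide_left_mono) (use Z_le Z1 eta_pos S_nonneg in auto)
  also have "\<dots> \<le> F t s" unfolding F_eq by (rule divide_right_mono[OF Y]) (use Z1 in auto)
  finally show ?thesis .
qed

lemma F_nonneg: "0 \<le> F t s"
  using F_lower[of t s] c_pos S_nonneg[of t s] by (meson mult_nonneg_nonneg order_trans less_imp_le)

lemma V_step: "F t s \<le> Vf P r g (ps (Suc t)) s - Vf P r g (ps t) s"
proof -
  have "Vf P r g (ps (Suc t)) s - Vf P r g (ps t) s = occ P g (ps (Suc t)) s (F t)"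
    unfolding perf_diff[OF ps_stoch ps_stoch] F_def[abs_def] ..
  moreover have "F t s \<le> occ P g (ps (Suc t)) s (F t)"
    by (rule occ_ge_head[OF ps_stoch]) (rule F_nonneg)
  ultimately show ?thesis by simp
qed

end


context eg_run begin

definition Vinf where "Vinf s = (SUP t. Vf P r g (ps t) s)"

lemma V_inc: "incseq (\<lambda>t. Vf P r g (ps t) s)"
proof (rule incseq_SucI)
  fix t
  show "Vf P r g (ps t) s \<le> Vf P r g (ps (Suc t)) s" using V_step[of t s] F_nonneg[of t s] by linarith
qed

lemma V_bdd: "bdd_above (range (\<lambda>t. Vf P r g (ps t) s))"
  using Vf_bounds[OF ps_stoch] by (auto intro!: bdd_aboveI[where M = B])

lemma Vlim: "(\<lambda>t. Vf P r g (ps t) s) \<longlonglongrightarrow> Vinf s"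
  unfolding Vinf_def by (rule LIMSEQ_incseq_SUP[OF V_bdd V_inc])

lemma V_le_Vinf: "Vf P r g (ps t) s \<le> Vinf s"
  unfolding Vinf_def by (rule cSUP_upper[OF _ V_bdd]) simp

lemma S_lim: "(\<lambda>t. S t s) \<longlonglongrightarrow> 0"
proof -
  have D: "(\<lambda>t. Vf P r g (ps (Suc t)) s - Vf P r g (ps t) s) \<longlonglongrightarrow> Vinf s - Vinf s"
    by (intro tendsto_intros Vlim LIMSEQ_Suc)
  have "(\<lambda>t. c * S t s) \<longlonglongrightarrow> 0"
  proof (rule tendsto_sandwich[where f="\<lambda>_. 0" and h="\<lambda>t. Vf P r g (ps (Suc t)) s - Vf P r g (ps t) s"])
    show "\<forall>\<^sub>F n in sequentially. 0 \<le> c * S n s" using c_pos S_nonneg by (simp add: less_imp_le)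
    show "\<forall>\<^sub>F n in sequentially. c * S n s \<le> Vf P r g (ps (Suc n)) s - Vf P r g (ps n) s"
      using F_lower V_step order_trans by (blast intro: always_eventually)
  qed (use D in auto)
  then have "(\<lambda>t. c * S t s / c) \<longlonglongrightarrow> 0 / c" by (intro tendsto_intros) (use c_pos in auto)
  then show ?thesis using c_pos by simp
qed

definition W where "W t s a = ps t s a * max 0 (U t s a)"

lemma W_nonneg: "0 \<le> W t s a" unfolding W_def using ps_pos[of t s a] by simp

lemma W_lim: "(\<lambda>t. W t s a) \<longlonglongrightarrow> 0"
proof (rule tendsto_sandwich[where f="\<lambda>_. 0" and h="\<lambda>t. sqrt (S t s)"])
  show "\<forall>\<^sub>F n in sequentially. 0 \<le> W n s a" using W_nonneg by simp
  show "\<forall>\<^sub>F n in sequentially. W n s a \<le> sqrt (S n s)"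
  proof (rule always_eventually, rule allI)
    fix t
    have p0: "0 \<le> ps t s a" and p1: "ps t s a \<le> 1" using ps_pos[of t s a] ps_le1[of t s a] by auto
    have "(W t s a)\<^sup>2 = ps t s a * ps t s a * (max 0 (U t s a))\<^sup>2" by (simp add: W_def power2_eq_square)
    also have "\<dots> \<le> ps t s a * (max 0 (U t s a))\<^sup>2"
      by (rule mult_right_mono) (use p0 p1 mult_left_le in auto)
    also have "\<dots> \<le> S t s" unfolding S_def
      by (rule member_le_sum[where f="\<lambda>a. ps t s a * (max 0 (U t s a))\<^sup>2"]) (auto simp: less_imp_le ps_pos)
    finally have "(W t s a)\<^sup>2 \<le> S t s" .
    then have "sqrt ((W t s a)\<^sup>2) \<le> sqrt (S t s)" by (rule real_sqrt_le_mono)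
    then show "W t s a \<le> sqrt (S t s)" using W_nonneg[of t s a] by simp
  qed
  have "(\<lambda>t. sqrt (S t s)) \<longlonglongrightarrow> sqrt 0" by (intro tendsto_intros S_lim)
  then show "(\<lambda>t. sqrt (S t s)) \<longlonglongrightarrow> 0" by simp
qed simp

definition Ainf where "Ainf s a = r s a + g * (\<Sum>s'\<in>UNIV. P s a s' * Vinf s') - Vinf s"

lemma U_lim: "(\<lambda>t. U t s a) \<longlonglongrightarrow> Ainf s a"
  unfolding adv_def Qf_def Ainf_def by (intro tendsto_intros Vlim)

lemma exp_minus_one_le: "0 \<le> x \<Longrightarrow> exp x - 1 \<le> x * exp (x::real)"
proof -
  assume "0 \<le> x"
  have "1 + (-x) \<le> exp (-x)" by (rule exp_ge_add_one_self)
  then have "(1 - x) * exp x \<le> exp (-x) * exp x" by (intro mult_right_mono) auto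
  then show ?thesis by (simp add: algebra_simps exp_minus_inverse)
qed

lemma Z_lim: "(\<lambda>t. Z t s) \<longlonglongrightarrow> 1"
proof (rule tendsto_sandwich[where f="\<lambda>_. 1" and h="\<lambda>t. 1 + eta * exp (eta * B) * (\<Sum>a\<in>UNIV. W t s a)"])
  show "\<forall>\<^sub>F n in sequentially. 1 \<le> Z n s" using Z_ge1 by simp
  show "\<forall>\<^sub>F n in sequentially. Z n s \<le> 1 + eta * exp (eta * B) * (\<Sum>a\<in>UNIV. W n s a)"
  proof (rule always_eventually, rule allI)
    fix t
    have "Z t s - 1 = (\<Sum>a\<in>UNIV. ps t s a * (exp (eta * max 0 (U t s a)) - 1))"
      using sum_p_const[OF ps_stoch, of t s 1] by (simp add: right_diff_distrib sum_subtractf)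
    also have "\<dots> \<le> (\<Sum>a\<in>UNIV. eta * exp (eta * B) * W t s a)"
    proof (rule sum_mono)
      fix a
      have x0: "0 \<le> eta * max 0 (U t s a)" using eta_pos by simp
      have xB: "eta * max 0 (U t s a) \<le> eta * B" by (rule mult_left_mono[OF maxU_le]) (use eta_pos in simp)
      have "exp (eta * max 0 (U t s a)) - 1 \<le> eta * max 0 (U t s a) * exp (eta * max 0 (U t s a))"
        by (rule exp_minus_one_le[OF x0])
      also have "\<dots> \<le> eta * max 0 (U t s a) * exp (eta * B)"
        by (rule mult_left_mono[OF _ x0]) (use xB in simp)
      finally have "ps t s a * (exp (eta * max 0 (U t s a)) - 1) \<le> ps t s a * (eta * max 0 (U t s a) * exp (eta * B))"
        by (rule mult_left_mono) (simp add: less_imp_le ps_pos)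
      then show "ps t s a * (exp (eta * max 0 (U t s a)) - 1) \<le> eta * exp (eta * B) * W t s a"
        by (simp add: W_def algebra_simps)
    qed
    finally show "Z t s \<le> 1 + eta * exp (eta * B) * (\<Sum>a\<in>UNIV. W t s a)"
      by (simp add: sum_distrib_left)
  qed
  have "(\<lambda>t. \<Sum>a\<in>UNIV. W t s a) \<longlonglongrightarrow> (\<Sum>a\<in>UNIV. 0)"
    using tendsto_sum[of UNIV "\<lambda>a t. W t s a" "\<lambda>_. 0" sequentially] W_lim by simp
  then have "(\<lambda>t. 1 + eta * exp (eta * B) * (\<Sum>a\<in>UNIV. W t s a)) \<longlonglongrightarrow> 1 + eta * exp (eta * B) * (\<Sum>a\<in>UNIV. 0)"
    by (intro tendsto_intros)
  then show "(\<lambda>t. 1 + eta * exp (eta * B) * (\<Sum>a\<in>UNIV. W t s a)) \<longlonglongrightarrow> 1" by simp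
qed simp

lemma Ainf_le0: "Ainf s a \<le> 0"
proof (rule ccontr)
  assume "\<not> Ainf s a \<le> 0"
  then have A: "0 < Ainf s a" by simp
  have "(\<lambda>t. exp (eta * U t s a) - Z t s) \<longlonglongrightarrow> exp (eta * Ainf s a) - 1"
    by (intro tendsto_intros U_lim Z_lim)
  moreover have "0 < exp (eta * Ainf s a) - 1" using A eta_pos by simp
  ultimately have ev1: "\<forall>\<^sub>F t in sequentially. 0 < exp (eta * U t s a) - Z t s"
    by (rule order_tendstoD)
  have ev2: "\<forall>\<^sub>F t in sequentially. 0 < U t s a"
    using U_lim A by (rule order_tendstoD)
  from eventually_conj[OF ev1 ev2] obtain N where N: "\<And>t. t \<ge> N \<Longrightarrow> 0 < exp (eta * U t s a) - Z t s \<and> 0 < U t s a"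
    by (auto simp: eventually_sequentially)
  have mono: "ps t s a \<le> ps (Suc t) s a" if "t \<ge> N" for t
  proof -
    from N[OF that] have u: "0 < U t s a" and z: "Z t s < exp (eta * U t s a)" by auto
    have Zp: "0 < Z t s" using Z_ge1[of t s] by simp
    have eq: "ps (Suc t) s a = ps t s a * (exp (eta * U t s a) / Z t s)"
      unfolding ps_Suc_eq using u by simp
    have "1 \<le> exp (eta * U t s a) / Z t s" using z Zp by simp
    then have le: "ps t s a * 1 \<le> ps t s a * (exp (eta * U t s a) / Z t s)"
      by (rule mult_left_mono) (simp add: less_imp_le ps_pos)
    show ?thesis unfolding eq using le by simp
  qed
  have lowb: "ps N s a \<le> ps t s a" if "t \<ge> N" for t
    using that
  proof (induction t rule: dec_induct)
    case base then show ?case by simp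
  next
    case (step n) then show ?case using mono[of n] by simp
  qed
  have L: "(\<lambda>t. ps N s a * max 0 (U t s a)) \<longlonglongrightarrow> ps N s a * max 0 (Ainf s a)"
    by (intro tendsto_intros U_lim)
  have ev: "\<forall>\<^sub>F t in sequentially. ps N s a * max 0 (U t s a) \<le> W t s a"
    unfolding eventually_sequentially W_def
    by (rule exI[of _ N]) (auto intro!: mult_right_mono lowb)
  have "ps N s a * max 0 (Ainf s a) \<le> 0"
    by (rule tendsto_le[OF trivial_limit_sequentially W_lim L ev])
  then show False using A ps_pos[of N s a] by (simp add: mult_le_0_iff)
qed

end


lemma sum_le_member_nonpos: "(\<And>x. h x \<le> (0::real)) \<Longrightarrow> sum h (UNIV::'b::finite set) \<le> h x0"
proof -
  assume h: "\<And>x. h x \<le> (0::real)"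
  have "sum h (UNIV::'b set) = h x0 + sum h (UNIV - {x0})" by (rule sum.remove) auto
  moreover have "sum h (UNIV - {x0}) \<le> 0" by (rule sum_nonpos) (use h in auto)
  ultimately show ?thesis by simp
qed

lemma stoch_le1: "stoch_policy p \<Longrightarrow> p s a \<le> 1"
proof -
  assume p: "stoch_policy p"
  have "p s a \<le> (\<Sum>b\<in>UNIV. p s b)" by (rule member_le_sum) (use p in \<open>auto simp: stoch_policy_def\<close>)
  then show ?thesis using p by (simp add: stoch_policy_def)
qed

lemma softmax_ok: "stoch_policy (softmax th) \<and> full_support (softmax th)"
proof -
  have Zp: "0 < (\<Sum>a'\<in>UNIV. exp (th s a'))" for s by (rule sum_pos) auto
  then show ?thesis
    by (auto simp: stoch_policy_def full_support_def softmax_def sum_divide_distrib[symmetric] less_imp_le) (metis less_irrefl)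
qed

context eg_run begin

lemma Vp_le_Vinf:
  assumes p: "stoch_policy p"
  shows "Vf P r g p s0 \<le> Vinf s0"
proof -
  define E where "E t = (\<Sum>s\<in>UNIV. \<Sum>a\<in>UNIV. \<bar>U t s a - Ainf s a\<bar>)" for t
  have inner: "(\<lambda>t. \<bar>U t s a - Ainf s a\<bar>) \<longlonglongrightarrow> 0" for s a
  proof -
    have "(\<lambda>t. \<bar>U t s a - Ainf s a\<bar>) \<longlonglongrightarrow> \<bar>Ainf s a - Ainf s a\<bar>" by (intro tendsto_intros U_lim)
    then show ?thesis by simp
  qed
  have inner2: "(\<lambda>t. \<Sum>a\<in>UNIV. \<bar>U t s a - Ainf s a\<bar>) \<longlonglongrightarrow> 0" for s
    using tendsto_sum[of UNIV "\<lambda>a t. \<bar>U t s a - Ainf s a\<bar>" "\<lambda>_. 0" sequentially] inner by simp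
  have E_lim: "E \<longlonglongrightarrow> 0"
    unfolding E_def[abs_def]
    using tendsto_sum[of UNIV "\<lambda>s t. \<Sum>a\<in>UNIV. \<bar>U t s a - Ainf s a\<bar>" "\<lambda>_. 0" sequentially] inner2 by simp
  have bound: "Vf P r g p s0 \<le> Vf P r g (ps t) s0 + E t / (1 - g)" for t
  proof -
    have pw: "(\<Sum>a\<in>UNIV. p s a * U t s a) \<le> E t" for s
    proof -
      have "(\<Sum>a\<in>UNIV. p s a * U t s a) \<le> (\<Sum>a\<in>UNIV. \<bar>U t s a - Ainf s a\<bar>)"
      proof (rule sum_mono)
        fix a
        have p0: "0 \<le> p s a" and p1: "p s a \<le> 1" using p stoch_le1[OF p] by (auto simp: stoch_policy_def)
        have "p s a * Ainf s a \<le> 0" using p0 Ainf_le0[of s a] by (simp add: mult_nonneg_nonpos)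
        moreover have "p s a * (U t s a - Ainf s a) \<le> p s a * \<bar>U t s a - Ainf s a\<bar>"
          by (rule mult_left_mono) (use p0 in auto)
        moreover have "p s a * \<bar>U t s a - Ainf s a\<bar> \<le> \<bar>U t s a - Ainf s a\<bar>"
          by (rule mult_left_le_one_le) (use p0 p1 in auto)
        ultimately show "p s a * U t s a \<le> \<bar>U t s a - Ainf s a\<bar>" by (simp add: right_diff_distrib)
      qed
      also have "\<dots> \<le> E t" unfolding E_def
        by (rule member_le_sum[where f="\<lambda>s. \<Sum>a\<in>UNIV. \<bar>U t s a - Ainf s a\<bar>"]) (auto intro: sum_nonneg)
      finally show ?thesis .
    qed
    have "Vf P r g p s0 - Vf P r g (ps t) s0 = occ P g p s0 (\<lambda>s. \<Sum>a\<in>UNIV. p s a * U t s a)"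
      by (rule perf_diff[OF p ps_stoch])
    also have "\<dots> \<le> occ P g p s0 (\<lambda>_. E t)" by (rule occ_mono[OF p]) (rule pw)
    also have "\<dots> = E t / (1 - g)" by (rule occ_const[OF p])
    finally show ?thesis by simp
  qed
  have "(\<lambda>t. Vf P r g (ps t) s0 + E t / (1 - g)) \<longlonglongrightarrow> Vinf s0 + 0 / (1 - g)"
    by (intro tendsto_intros Vlim E_lim) (use g_lt1 in simp)
  then have L: "(\<lambda>t. Vf P r g (ps t) s0 + E t / (1 - g)) \<longlonglongrightarrow> Vinf s0" by simp
  show ?thesis
    by (rule tendsto_le[OF trivial_limit_sequentially L tendsto_const]) (use bound in simp)
qed

lemma V_to_opt:
  assumes opt: "optimal_policy P r g q"
  shows "(\<lambda>t. Vf P r g (ps t) s) \<longlonglongrightarrow> Vf P r g q s"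
proof -
  have q: "stoch_policy q" using opt by (simp add: optimal_policy_def)
  have "Vinf s \<le> Vf P r g q s"
    unfolding Vinf_def by (rule cSUP_least) (use opt ps_stoch in \<open>auto simp: optimal_policy_def\<close>)
  moreover have "Vf P r g q s \<le> Vinf s" by (rule Vp_le_Vinf[OF q])
  ultimately have "Vinf s = Vf P r g q s" by simp
  then show ?thesis using Vlim[of s] by simp
qed

end

theorem theorem5:
  fixes P :: "'s::finite \<Rightarrow> 'a::finite \<Rightarrow> 's \<Rightarrow> real"
    and r :: "'s \<Rightarrow> 'a \<Rightarrow> real" and g :: real and rho :: "'s \<Rightarrow> real"
    and pistar :: "'s \<Rightarrow> 'a \<Rightarrow> real" and dmin :: real
  assumes mdp: "valid_mdp P r g rho"
    and opt: "optimal_policy P r g pistar"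
    and uniq: "\<forall>p. optimal_policy P r g p \<longrightarrow> p = pistar"
    and dmin_pos: "0 < dmin"
    and reach: "\<forall>p. stoch_policy p \<and> full_support p \<longrightarrow> (\<forall>s. dmin \<le> dvis P g rho p s)"
  shows "\<exists>eta0>0. \<forall>eta theta0 ps.
           0 < eta \<and> eta \<le> eta0 \<and> ps 0 = softmax theta0 \<and>
           (\<forall>t. ps (Suc t) = eg_step P r g eta (ps t)) \<longrightarrow>
           ((\<lambda>t. Vrho P r g rho (ps t)) \<longlonglongrightarrow> Vstar P r g rho) \<and>
           Vstar P r g rho = Vrho P r g rho pistar \<and>
           (\<forall>s a. (\<lambda>t. ps t s a) \<longlonglongrightarrow> pistar s a)"
proof -
  interpret M: mdp P r g using mdp by (unfold_locales) (auto simp: valid_mdp_def)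
  have rho0: "0 \<le> rho s" for s using mdp by (simp add: valid_mdp_def)
  have g1: "g < 1" using mdp by (simp add: valid_mdp_def)
  have qs: "stoch_policy pistar" using opt by (simp add: optimal_policy_def)
  have Vstar_eq: "Vstar P r g rho = Vrho P r g rho pistar"
    unfolding Vstar_def
  proof (rule cSup_eq_maximum)
    show "Vrho P r g rho pistar \<in> (\<lambda>p. Vrho P r g rho p) ` {p. stoch_policy p}" using qs by simp
    fix x assume "x \<in> (\<lambda>p. Vrho P r g rho p) ` {p. stoch_policy p}"
    then obtain p where p: "stoch_policy p" and x: "x = Vrho P r g rho p" by auto
    show "x \<le> Vrho P r g rho pistar" unfolding x Vrho_def
      by (intro sum_mono mult_left_mono) (use opt p rho0 in \<open>auto simp: optimal_policy_def\<close>)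
  qed
  show ?thesis
  proof (rule exI[of _ 1], intro conjI allI impI)
    show "(0::real) < 1" by simp
    fix eta theta0 ps
    assume H: "0 < eta \<and> eta \<le> 1 \<and> ps 0 = softmax theta0 \<and> (\<forall>t. ps (Suc t) = eg_step P r g eta (ps t))"
    interpret E: eg_run P r g eta ps
      using H softmax_ok[of theta0] by unfold_locales auto
    have Vlim: "(\<lambda>t. Vrho P r g rho (ps t)) \<longlonglongrightarrow> Vrho P r g rho pistar"
    proof -
      have "(\<lambda>t. rho s * Vf P r g (ps t) s) \<longlonglongrightarrow> rho s * Vf P r g pistar s" for s
        by (intro tendsto_intros E.V_to_opt[OF opt])
      then show ?thesis unfolding Vrho_def
        using tendsto_sum[of UNIV "\<lambda>s t. rho s * Vf P r g (ps t) s" "\<lambda>s. rho s * Vf P r g pistar s" sequentially]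
        by simp
    qed
    then show "(\<lambda>t. Vrho P r g rho (ps t)) \<longlonglongrightarrow> Vstar P r g rho" using Vstar_eq by simp
    show "Vstar P r g rho = Vrho P r g rho pistar" by (rule Vstar_eq)
    let ?A = "adv P r g pistar"
    define G where "G t = (1 - g) * (Vrho P r g rho pistar - Vrho P r g rho (ps t))" for t
    have G_lim: "G \<longlonglongrightarrow> 0"
    proof -
      have "G \<longlonglongrightarrow> (1 - g) * (Vrho P r g rho pistar - Vrho P r g rho pistar)"
        unfolding G_def[abs_def] by (intro tendsto_intros Vlim)
      then show ?thesis by simp
    qed
    have key: "dmin * (ps t s a * (- ?A s a)) \<le> G t" for t s a
    proof -
      define f where "f s' = (\<Sum>b\<in>UNIV. ps t s' b * ?A s' b)" for s'
      have tle: "ps t s' b * ?A s' b \<le> 0" for s' b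
        using E.ps_pos[of t s' b] M.Astar_le0[OF opt, of s' b] by (simp add: mult_nonneg_nonpos less_imp_le)
      have fle: "f s' \<le> ps t s' b * ?A s' b" for s' b
        unfolding f_def by (rule sum_le_member_nonpos) (rule tle)
      have f0: "f s' \<le> 0" for s' using fle[of s' a] tle[of s' a] by simp
      have dv: "dmin \<le> dvis P g rho (ps t) s'" for s'
        using reach E.ps_stoch[of t] E.ps_ok[of t] by blast
      have "Vrho P r g rho (ps t) - Vrho P r g rho pistar = (\<Sum>s0\<in>UNIV. rho s0 * (Vf P r g (ps t) s0 - Vf P r g pistar s0))"
        unfolding Vrho_def by (simp add: sum_subtractf right_diff_distrib)
      also have "\<dots> = (\<Sum>s0\<in>UNIV. rho s0 * occ P g (ps t) s0 f)"
        unfolding f_def[abs_def] M.perf_diff[OF E.ps_stoch qs] ..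
      also have "\<dots> = (\<Sum>s'\<in>UNIV. dvis P g rho (ps t) s' * f s') / (1 - g)"
        by (rule M.rho_occ[OF E.ps_stoch])
      finally have X: "(1 - g) * (Vrho P r g rho (ps t) - Vrho P r g rho pistar) = (\<Sum>s'\<in>UNIV. dvis P g rho (ps t) s' * f s')"
        using g1 by simp
      have "(\<Sum>s'\<in>UNIV. dvis P g rho (ps t) s' * f s') \<le> dvis P g rho (ps t) s * f s"
      proof (rule sum_le_member_nonpos)
        fix x
        show "dvis P g rho (ps t) x * f x \<le> 0"
          using dv[of x] dmin_pos f0[of x] by (simp add: mult_nonneg_nonpos)
      qed
      also have "\<dots> \<le> dmin * f s" by (rule mult_right_mono_neg[OF dv f0])
      also have "\<dots> \<le> dmin * (ps t s a * ?A s a)" by (rule mult_left_mono[OF fle]) (use dmin_pos in simp)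
      finally have "(1 - g) * (Vrho P r g rho (ps t) - Vrho P r g rho pistar) \<le> dmin * (ps t s a * ?A s a)"
        using X by simp
      then show ?thesis unfolding G_def by (simp add: algebra_simps)
    qed
    have neg_case: "(\<lambda>t. ps t s a) \<longlonglongrightarrow> 0" if n: "?A s a < 0" for s a
    proof (rule tendsto_sandwich[where f="\<lambda>_. 0" and h="\<lambda>t. G t / (dmin * (- ?A s a))"])
      have k: "0 < dmin * (- ?A s a)" by (intro mult_pos_pos) (use dmin_pos n in auto)
      show "\<forall>\<^sub>F t in sequentially. 0 \<le> ps t s a" using E.ps_pos by (simp add: less_imp_le)
      show "\<forall>\<^sub>F t in sequentially. ps t s a \<le> G t / (dmin * (- ?A s a))"
      proof (rule always_eventually, rule allI)
        fix t
        show "ps t s a \<le> G t / (dmin * (- ?A s a))"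
        proof -
          have "ps t s a * (dmin * (- ?A s a)) \<le> G t" by (subst mult.left_commute) (rule key)
          then show ?thesis by (simp only: pos_le_divide_eq[OF k])
        qed
      qed
      have "(\<lambda>t. G t * (1 / (dmin * (- ?A s a)))) \<longlonglongrightarrow> 0 * (1 / (dmin * (- ?A s a)))"
        by (rule tendsto_mult_right[OF G_lim])
      then show "(\<lambda>t. G t / (dmin * (- ?A s a))) \<longlonglongrightarrow> 0" by simp
    qed simp
    show "(\<lambda>t. ps t s a) \<longlonglongrightarrow> pistar s a" for s a
    proof (cases "?A s a < 0")
      case True
      then show ?thesis using neg_case[OF True] M.Astar_neg[OF opt True] by simp
    next
      case False
      then have z: "?A s a = 0" using M.Astar_le0[OF opt, of s a] by simp
      have one: "pistar s a = 1" by (rule M.Astar_zero[OF opt uniq z])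
      have "(\<Sum>b\<in>UNIV. pistar s b) = pistar s a + (\<Sum>b\<in>UNIV - {a}. pistar s b)"
        by (rule sum.remove[of UNIV a "pistar s"]) auto
      moreover have "(\<Sum>b\<in>UNIV. pistar s b) = 1" using qs by (simp add: stoch_policy_def)
      ultimately have rest0: "(\<Sum>b\<in>UNIV - {a}. pistar s b) = 0" using one by linarith
      have others0: "pistar s b = 0" if "b \<noteq> a" for b
      proof -
        have nn: "0 \<le> pistar s x" if "x \<in> UNIV - {a}" for x using qs by (simp add: stoch_policy_def)
        have "(sum (pistar s) (UNIV - {a}) = 0) = (\<forall>x\<in>UNIV - {a}. pistar s x = 0)"
          by (rule sum_nonneg_eq_0_iff) (simp, rule nn)
        then have "\<forall>x\<in>UNIV - {a}. pistar s x = 0" using rest0 by simp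
        then show ?thesis using that by auto
      qed
      have others: "(\<lambda>t. ps t s b) \<longlonglongrightarrow> 0" if "b \<noteq> a" for b
      proof -
        have "?A s b \<noteq> 0"
        proof
          assume "?A s b = 0"
          then have "pistar s b = 1" by (rule M.Astar_zero[OF opt uniq])
          then show False using others0[OF that] by simp
        qed
        then have "?A s b < 0" using M.Astar_le0[OF opt, of s b] by simp
        then show ?thesis by (rule neg_case)
      qed
      have eqps: "ps t s a = 1 - (\<Sum>b\<in>UNIV - {a}. ps t s b)" for t
      proof -
        have "(\<Sum>b\<in>UNIV. ps t s b) = ps t s a + (\<Sum>b\<in>UNIV - {a}. ps t s b)"
          by (rule sum.remove[of UNIV a "ps t s"]) auto
        moreover have "(\<Sum>b\<in>UNIV. ps t s b) = 1" using E.ps_stoch[of t] by (simp add: stoch_policy_def)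
        ultimately show ?thesis by linarith
      qed
      have "(\<lambda>t. \<Sum>b\<in>UNIV - {a}. ps t s b) \<longlonglongrightarrow> (\<Sum>b\<in>UNIV - {a}. 0)"
        using tendsto_sum[of "UNIV - {a}" "\<lambda>b t. ps t s b" "\<lambda>_. 0" sequentially] others by simp
      then have "(\<lambda>t. 1 - (\<Sum>b\<in>UNIV - {a}. ps t s b)) \<longlonglongrightarrow> 1 - 0"
        by (intro tendsto_intros) simp
      then show ?thesis using one eqps by simp
    qed
  qed
qed


end
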